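(* For arbitrarily large integers $n$ there exist (families of) feasible $n$-node graphs with election index $1$ such that leader election in time $1$ in these graphs requires advice of size $\Omega(n\log\log n)$. Precisely: there is a constant $c>0$ such that for infinitely many integers $n$ there is a finite family $\mathcal{F}_n$ of feasible $n$-node graphs, each with election index $1$, such that for every deterministic leader election algorithm with advice that performs leader election in time $1$ in every graph of $\mathcal{F}_n$, some graph of $\mathcal{F}_n$ receives advice of length at least $c\, n\log\log n$.
   Context: A graph is a simple undirected connected finite graph whose nodes have no identifiers; at each node $v$ of degree $d$ the incident edges carry distinct port numbers $0,\dots,d-1$ (local to each node). The truncated view $\mathcal{V}^0(v)$ is a single node; $\mathcal{V}^{l+1}(v)$ is the port-labelled rooted tree whose root has, for every neighbour $v_i$ of $v$, a child $x_i$ joined by an edge carrying the same two port numbers as $\{v,v_i\}$ (the one at $v$ at the root side), and $x_i$ is the root of a copy of $\mathcal{V}^l(v_i)$. The augmented truncated view $\mathcal{B}^l(v)$ is $\mathcal{V}^l(v)$ with each leaf labelled by the degree in $G$ of the node it represents. A graph is feasible if for some $l$ the views $\mathcal{B}^l(v)$ of all nodes are pairwise distinct; its election index is the smallest such $l$. Model (LOCAL): synchronous rounds, all nodes start simultaneously, in each round every node exchanges arbitrary messages with all neighbours and computes arbitrarily. Leader election: every node $v$ outputs a sequence $(p_1,q_1,\dots,p_k,q_k)$ of nonnegative integers describing a simple path starting at $v$ whose $i$-th edge has port $p_i$ at its endpoint closer to $v$ and $q_i$ at the other endpoint; all these paths must end at a common node. Time is the number of rounds until all nodes output. Advice: an oracle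 knowing the entire port-labelled graph gives the same binary string to all nodes before the start; its length is the size of advice. In a deterministic algorithm with advice, the actions/output of node $v$ in round $r$ are a function of the advice and of $\mathcal{B}^r(v)$. Logarithms are base 2. *)

theory Defs
  imports Complex_Main
begin

text \<open>At node v the incident
edges carry the ports 0..<deg G v, and nbr G v p is the neighbour reached
through port p at v. Nodes have no identifiers: node numbers are only used
for the representation; the algorithm only sees views.\<close>

record pgraph =
  nv  :: nat
  deg :: "nat \<Rightarrow> nat"
  nbr :: "nat \<Rightarrow> nat \<Rightarrow> nat"

definition verts :: "pgraph \<Rightarrow> nat set" where
  "verts G = {..<nv G}"

definition edge_rel :: "pgraph \<Rightarrow> (nat \<times> nat) set" where
  "edge_rel G = {(u, w). u < nv G \<and> (\<exists>p < deg G u. nbr G u p = w)}"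

definition wf_pgraph :: "pgraph \<Rightarrow> bool" where
  "wf_pgraph G \<longleftrightarrow>
     nv G \<ge> 1 \<and>
     (\<forall>v < nv G. \<forall>p < deg G v. nbr G v p < nv G \<and> nbr G v p \<noteq> v) \<and>
     (\<forall>v < nv G. inj_on (nbr G v) {..<deg G v}) \<and>
     (\<forall>v < nv G. \<forall>p < deg G v. \<exists>q < deg G (nbr G v p). nbr G (nbr G v p) q = v) \<and>
     (\<forall>u < nv G. \<forall>v < nv G. (u, v) \<in> (edge_rel G)\<^sup>*)"

definition rport :: "pgraph \<Rightarrow> nat \<Rightarrow> nat \<Rightarrow> nat" where
  "rport G v p = (THE q. q < deg G (nbr G v p) \<and> nbr G (nbr G v p) q = v)"

text \<open>Port-labelled rooted trees; leaves carry a label (the degree).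
The children of a node are listed in the order of the port at the parent.\<close>
datatype view = Leaf nat | Node "(nat \<times> nat \<times> view) list"

fun bview :: "pgraph \<Rightarrow> nat \<Rightarrow> nat \<Rightarrow> view" where
  "bview G 0 v = Leaf (deg G v)"
| "bview G (Suc l) v =
     Node (map (\<lambda>p. (p, rport G v p, bview G l (nbr G v p))) [0..<deg G v])"

definition feasible :: "pgraph \<Rightarrow> bool" where
  "feasible G \<longleftrightarrow> (\<exists>l. inj_on (bview G l) (verts G))"

definition election_index :: "pgraph \<Rightarrow> nat" where
  "election_index G = (LEAST l. inj_on (bview G l) (verts G))"

text \<open>Following an output sequence (p1,q1,...,pk,qk) from u; returns the list
of visited nodes if the sequence describes a walk, None otherwise.\<close>
fun walk :: "pgraph \<Rightarrow> nat \<Rightarrow> nat list \<Rightarrow> nat list option" where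
  "walk G u [] = Some [u]"
| "walk G u [p] = None"
| "walk G u (p # q # rest) =
     (if p < deg G u \<and> rport G u p = q
      then map_option (Cons u) (walk G (nbr G u p) rest) else None)"

definition elects :: "pgraph \<Rightarrow> (nat \<Rightarrow> nat list) \<Rightarrow> bool" where
  "elects G out \<longleftrightarrow>
     (\<exists>l \<in> verts G. \<forall>v \<in> verts G. \<exists>vs.
        walk G v (out v) = Some vs \<and> distinct vs \<and> last vs = l)"

text \<open>A deterministic algorithm with advice working in time 1: the oracle adv
maps each graph to an advice string, and the output of node v is a function
A of the advice and of B^1(v).\<close>
definition elects_time1 :: "(pgraph \<Rightarrow> bool list) \<Rightarrow> (bool list \<Rightarrow> view \<Rightarrow> nat list) \<Rightarrow> pgraph \<Rightarrow> bool" where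
  "elects_time1 adv A G \<longleftrightarrow> elects G (\<lambda>v. A (adv G) (bview G 1 v))"

end

theory Submission
  imports Defs "HOL-Combinatorics.Permutations" "HOL-Library.Infinite_Set"
begin



datatype nd = Hub | Con nat | An nat | Bn nat nat

definition KK :: "nat \<Rightarrow> nat" where "KK m = m ^ m"
definition NN :: "nat \<Rightarrow> nat" where "NN m = 1 + KK m + KK m * (m+1)"

fun enc :: "nat \<Rightarrow> nd \<Rightarrow> nat" where
  "enc m Hub = 0"
| "enc m (Con j) = Suc j"
| "enc m (An i) = Suc (KK m + i*(m+1))"
| "enc m (Bn i t) = Suc (KK m + i*(m+1) + Suc t)"

definition decb :: "nat \<Rightarrow> nat \<Rightarrow> nd" where
  "decb m u = (if u mod (m+1) = 0 then An (u div (m+1)) else Bn (u div (m+1)) (u mod (m+1) - 1))"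

definition dec :: "nat \<Rightarrow> nat \<Rightarrow> nd" where
  "dec m v = (if v = 0 then Hub else if v \<le> KK m then Con (v - 1) else decb m (v - 1 - KK m))"

fun valid :: "nat \<Rightarrow> nd \<Rightarrow> bool" where
  "valid m Hub = True"
| "valid m (Con j) = (j < KK m)"
| "valid m (An i) = (i < KK m)"
| "valid m (Bn i t) = (i < KK m \<and> t < m)"

lemma decb_An: "decb m (i*(m+1)) = An i"
proof -
  have a: "(i*(m+1)) mod (m+1) = 0" by (rule mod_mult_self2_is_0)
  have b: "(i*(m+1)) div (m+1) = i" by (rule nonzero_mult_div_cancel_right) simp
  show ?thesis unfolding decb_def a b by simp
qed

lemma decb_Bn: assumes "t < m" shows "decb m (Suc t + i*(m+1)) = Bn i t"
proof -
  have a: "(Suc t + i*(m+1)) mod (m+1) = Suc t" using assms by (simp only: mod_mult_self1) simp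
  have b: "(Suc t + i*(m+1)) div (m+1) = i" using assms by (simp only: div_mult_self1[of "m+1"]) simp
  show ?thesis unfolding decb_def a b by simp
qed

lemma dec_enc: "valid m x \<Longrightarrow> dec m (enc m x) = x"
proof (cases x)
  case (An i)
  have e: "Suc (KK m + i*(m+1)) - 1 - KK m = i*(m+1)" by simp
  show ?thesis using An unfolding dec_def by (simp only: e decb_An enc.simps) simp
next
  case (Bn i t)
  assume "valid m x"
  with Bn have t: "t < m" by simp
  have e: "Suc (KK m + i*(m+1) + Suc t) - 1 - KK m = Suc t + i*(m+1)" by simp
  show ?thesis using Bn unfolding dec_def by (simp only: e decb_Bn[OF t] enc.simps) simp
qed (auto simp: dec_def)

lemma enc_lt: "valid m x \<Longrightarrow> enc m x < NN m"
proof (cases x)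
  case (An i)
  assume "valid m x"
  then have "Suc i \<le> KK m" using An by simp
  then have "Suc i * (m+1) \<le> KK m * (m+1)" by (rule mult_right_mono) simp
  then show ?thesis using An by (simp add: NN_def)
next
  case (Bn i t)
  assume "valid m x"
  then have "Suc i \<le> KK m" "t < m" using Bn by auto
  then have "Suc i * (m+1) \<le> KK m * (m+1)" by (intro mult_right_mono) simp_all
  then show ?thesis using Bn \<open>t<m\<close> by (simp add: NN_def)
qed (auto simp: NN_def)

lemma enc_inj: "valid m x \<Longrightarrow> valid m y \<Longrightarrow> enc m x = enc m y \<Longrightarrow> x = y"
  by (metis dec_enc)

lemma dec_valid: assumes "v < NN m" shows "valid m (dec m v) \<and> enc m (dec m v) = v"
proof -
  consider "v = 0" | "v \<noteq> 0" "v \<le> KK m" | "v > KK m" by linarith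
  then show ?thesis
  proof cases
    case 3
    define u where "u = v - 1 - KK m"
    have u: "u < KK m * (m+1)" using assms 3 by (simp add: NN_def u_def)
    have ud: "u div (m+1) < KK m" using u by (simp add: less_mult_imp_div_less)
    have vu: "v = Suc (KK m + u)" using 3 u_def by simp
    have uu: "u = u mod (m+1) + u div (m+1) * (m+1)" by (rule mod_div_mult_eq[symmetric])
    have dv: "dec m v = decb m u" using 3 by (simp add: dec_def u_def)
    show ?thesis
    proof (cases "u mod (m+1) = 0")
      case True
      have dv2: "dec m v = An (u div (m+1))" using dv True by (simp add: decb_def)
      have "enc m (An (u div (m+1))) = Suc (KK m + u div (m+1) * (m+1))" by simp
      also have "\<dots> = v" using vu True uu by (metis add_0)
      finally show ?thesis using dv2 ud by simp
    next
      case False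
      have "u mod (m+1) < m+1" by simp
      then have lt: "u mod (m+1) - 1 < m" using False by linarith
      have "Suc (u mod (m+1) - 1) = u mod (m+1)" using False by simp
      then have ee: "enc m (Bn (u div (m+1)) (u mod (m+1) - 1)) = v" using vu uu
        by (simp del: mult_Suc_right)
      have dv2: "dec m v = Bn (u div (m+1)) (u mod (m+1) - 1)" using dv False by (simp add: decb_def)
      show ?thesis using dv2 ee ud lt by simp
    qed
  qed (auto simp: dec_def)
qed




definition dig :: "nat \<Rightarrow> nat \<Rightarrow> nat \<Rightarrow> nat" where "dig m i t = i div m ^ t mod m"
definition bnb :: "nat \<Rightarrow> nat \<Rightarrow> nat \<Rightarrow> nat \<Rightarrow> nat" where
  "bnb m d t p = nat ((int p - int d + int t) mod int m)"
definition bport :: "nat \<Rightarrow> nat \<Rightarrow> nat \<Rightarrow> nat \<Rightarrow> nat" where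
  "bport m d t l = nat ((int d + int l - int t) mod int m)"

lemma dig_lt: "0 < m \<Longrightarrow> dig m i t < m" by (simp add: dig_def)

lemma bnb_lt: "0 < m \<Longrightarrow> bnb m d t p < m"
  unfolding bnb_def by (simp add: nat_less_iff)
lemma bport_lt: "0 < m \<Longrightarrow> bport m d t l < m"
  unfolding bport_def by (simp add: nat_less_iff)

lemma bnb_bport: assumes "0 < m" "l < m" shows "bnb m d t (bport m d t l) = l"
proof -
  have "((int d + int l - int t) mod int m - int d + int t) mod int m = (int d + int l - int t - int d + int t) mod int m"
    by (metis mod_add_left_eq mod_diff_left_eq)
  also have "\<dots> = int l" using assms by simp
  finally show ?thesis unfolding bnb_def bport_def using assms by simp
qed
lemma bport_bnb: assumes "0 < m" "p < m" shows "bport m d t (bnb m d t p) = p"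
proof -
  have "(int d + (int p - int d + int t) mod int m - int t) mod int m = (int d + (int p - int d + int t) - int t) mod int m"
    by (metis mod_add_right_eq mod_diff_left_eq)
  also have "\<dots> = int p" using assms by simp
  finally show ?thesis unfolding bnb_def bport_def using assms by simp
qed

lemma nat_mod_eq_iff: "0 < m \<Longrightarrow> t < m \<Longrightarrow> (nat ((x::int) mod int m) = t) = (x mod int m = int t)"
  by auto

lemma mod_add_cancel0: "((x::int) + y) mod m = y mod m \<longleftrightarrow> x mod m = 0"
  by (metis (no_types, opaque_lifting) add.assoc add_0 diff_add_cancel mod_add_left_eq mod_self)

lemma int_mod_self_iff: assumes "0 < m" "a < m" "b < m"
  shows "((int a - int b) mod int m = 0) = (a = b)"
proof
  assume h: "(int a - int b) mod int m = 0"
  have "\<bar>int a - int b\<bar> < int m" using assms by linarith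
  moreover have "int m dvd (int a - int b)" using h by (simp add: mod_eq_0_iff_dvd)
  ultimately have "int a - int b = 0"
  proof -
    assume a1: "\<bar>int a - int b\<bar> < int m" and a2: "int m dvd (int a - int b)"
    show ?thesis
    proof (rule ccontr)
      assume "int a - int b \<noteq> 0"
      from dvd_imp_le_int[OF this a2] a1 show False by simp
    qed
  qed
  then show "a = b" by simp
qed simp

lemma bnb_eq_t: assumes "0 < m" "p < m" "d < m" "t < m" shows "(bnb m d t p = t) = (p = d)"
proof -
  have "(bnb m d t p = t) = ((int p - int d + int t) mod int m = int t)"
    unfolding bnb_def by (rule nat_mod_eq_iff[OF assms(1) assms(4)])
  also have "\<dots> = ((int p - int d + int t) mod int m = int t mod int m)" using assms by simp
  also have "\<dots> = ((int p - int d) mod int m = 0)"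
    using mod_add_cancel0[of "int p - int d" "int t" "int m"] by simp
  also have "\<dots> = (p = d)" by (rule int_mod_self_iff[OF assms(1) assms(2) assms(3)])
  finally show ?thesis .
qed

lemma bport_eq_d: assumes "0 < m" "l < m" "d < m" "t < m" shows "(bport m d t l = d) = (l = t)"
proof -
  have "(bport m d t l = d) = ((int d + int l - int t) mod int m = int d)"
    unfolding bport_def by (rule nat_mod_eq_iff[OF assms(1) assms(3)])
  also have "\<dots> = ((int d + int l - int t) mod int m = int d mod int m)" using assms by simp
  also have "\<dots> = ((int l - int t) mod int m = 0)"
    using mod_add_cancel0[of "int l - int t" "int d" "int m"] by (simp add: algebra_simps)
  also have "\<dots> = (l = t)" by (rule int_mod_self_iff[OF assms(1) assms(2) assms(4)])
  finally show ?thesis .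
qed

lemma bport_inj_d: assumes "0 < m" "d < m" "d' < m" "bport m d t l = bport m d' t l" shows "d = d'"
proof -
  have "(int d + int l - int t) mod int m = (int d' + int l - int t) mod int m"
    using assms(4) unfolding bport_def using assms(1) by (subst (asm) eq_nat_nat_iff) simp_all
  then have "(int d + (int l - int t)) mod int m = (int d' + (int l - int t)) mod int m" by (simp add: algebra_simps)
  then have "int d mod int m = int d' mod int m" by algebra
  then show ?thesis using assms by simp
qed

lemma bnb_inj: assumes "0 < m" "p < m" "p' < m" "bnb m d t p = bnb m d t p'" shows "p = p'"
proof -
  have "bport m d t (bnb m d t p) = bport m d t (bnb m d t p')" using assms(4) by simp
  then show ?thesis using bport_bnb[OF assms(1) assms(2)] bport_bnb[OF assms(1) assms(3)] by simp
qed




fun degN :: "nat \<Rightarrow> nd \<Rightarrow> nat" where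
  "degN m Hub = KK m"
| "degN m (Con j) = 2"
| "degN m (An i) = m + 1"
| "degN m (Bn i t) = m"

fun nbrN :: "nat \<Rightarrow> (nat \<Rightarrow> nat) \<Rightarrow> nd \<Rightarrow> nat \<Rightarrow> nd" where
  "nbrN m \<rho> Hub p = Con p"
| "nbrN m \<rho> (Con j) p = (if p = 0 then Hub else An (inv \<rho> j))"
| "nbrN m \<rho> (An i) p = (if p = 0 then Con (\<rho> i) else Bn i (p - 1))"
| "nbrN m \<rho> (Bn i t) p = (if p = dig m i t then An i else Bn i (bnb m (dig m i t) t p))"

fun rportN :: "nat \<Rightarrow> nd \<Rightarrow> nat \<Rightarrow> nat" where
  "rportN m Hub p = 0"
| "rportN m (Con j) p = (if p = 0 then j else 0)"
| "rportN m (An i) p = (if p = 0 then 1 else dig m i (p - 1))"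
| "rportN m (Bn i t) p = (if p = dig m i t then Suc t
     else bport m (dig m i (bnb m (dig m i t) t p)) (bnb m (dig m i t) t p) t)"

fun dN :: "nat \<Rightarrow> nd \<Rightarrow> nat \<Rightarrow> nat" where
  "dN m Hub p = 2"
| "dN m (Con j) p = (if p = 0 then KK m else m + 1)"
| "dN m (An i) p = (if p = 0 then 2 else m)"
| "dN m (Bn i t) p = (if p = dig m i t then m + 1 else m)"

definition Gr :: "nat \<Rightarrow> (nat \<Rightarrow> nat) \<Rightarrow> pgraph" where
  "Gr m \<rho> = \<lparr>nv = NN m, deg = (\<lambda>v. degN m (dec m v)), nbr = (\<lambda>v p. enc m (nbrN m \<rho> (dec m v) p))\<rparr>"

lemma KK_big: "3 \<le> m \<Longrightarrow> m + 2 \<le> KK m"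
proof -
  assume m: "3 \<le> m"
  have "m ^ 2 \<le> m ^ m" using m by (intro power_increasing) auto
  moreover have "3 * m \<le> m * m" using mult_le_mono1[OF m] by simp
  then have "m + 2 \<le> m * m" using m by linarith
  then have "m + 2 \<le> m ^ 2" by (simp only: power2_eq_square)
  ultimately show ?thesis unfolding KK_def by linarith
qed

context
  fixes m :: nat and \<rho> :: "nat \<Rightarrow> nat"
  assumes m3: "3 \<le> m" and perm: "\<rho> permutes {..<KK m}"
begin

lemma m0: "0 < m" using m3 by simp

lemma rho_lt: "i < KK m \<Longrightarrow> \<rho> i < KK m"
  using perm permutes_in_image by fastforce
lemma inv_lt: "j < KK m \<Longrightarrow> inv \<rho> j < KK m"
  using permutes_inv[OF perm] permutes_in_image by fastforce
lemma rho_inv: "\<rho> (inv \<rho> j) = j"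
  using permutes_inverses(1)[OF perm] by simp
lemma inv_rho: "inv \<rho> (\<rho> j) = j"
  using permutes_inverses(2)[OF perm] by simp

lemma nbr_props:
  assumes x: "valid m x" and p: "p < degN m x"
  shows "valid m (nbrN m \<rho> x p) \<and> nbrN m \<rho> x p \<noteq> x \<and> rportN m x p < degN m (nbrN m \<rho> x p)
    \<and> nbrN m \<rho> (nbrN m \<rho> x p) (rportN m x p) = x \<and> degN m (nbrN m \<rho> x p) = dN m x p"
proof (cases x)
  case Hub
  then show ?thesis using x p by auto
next
  case (Con j)
  then show ?thesis using x p KK_big[OF m3] rho_inv inv_lt by auto
next
  case (An i)
  then show ?thesis using x p KK_big[OF m3] rho_lt inv_rho dig_lt[OF m0]
    by (auto simp: dig_lt[OF m0] bport_eq_d)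
next
  case (Bn i t)
  define d where "d = dig m i t"
  have d: "d < m" using dig_lt[OF m0] d_def by simp
  have it: "i < KK m" "t < m" using x Bn by auto
  show ?thesis
  proof (cases "p = d")
    case True
    then show ?thesis using Bn it d_def by auto
  next
    case False
    define l where "l = bnb m d t p"
    have l: "l < m" using bnb_lt[OF m0] l_def by simp
    have lt: "l \<noteq> t" using bnb_eq_t[OF m0 _ d it(2), of p] p Bn False l_def by simp
    define e where "e = dig m i l"
    have e: "e < m" using dig_lt[OF m0] e_def by simp
    have q: "bport m e l t < m" using bport_lt[OF m0] by simp
    have qne: "bport m e l t \<noteq> e" using bport_eq_d[OF m0 it(2) e l] lt by simp
    have bk: "bnb m e l (bport m e l t) = t" using bnb_bport[OF m0 it(2)] by simp
    have nb: "nbrN m \<rho> x p = Bn i l" using Bn False d_def l_def by simp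
    have rp: "rportN m x p = bport m e l t" using Bn False d_def l_def e_def by simp
    show ?thesis using nb rp it l lt q qne bk e_def Bn False d_def by auto
  qed
qed

lemma nbr_inj: assumes x: "valid m x" shows "inj_on (nbrN m \<rho> x) {..<degN m x}"
proof (cases x)
  case (Bn i t)
  have it: "i < KK m" "t < m" using x Bn by auto
  show ?thesis unfolding inj_on_def
  proof (intro ballI impI)
    fix p p' assume pp: "p \<in> {..<degN m x}" "p' \<in> {..<degN m x}" "nbrN m \<rho> x p = nbrN m \<rho> x p'"
    show "p = p'"
    proof (cases "p = dig m i t \<or> p' = dig m i t")
      case True then show ?thesis using pp Bn by (auto split: if_splits)
    next
      case False
      then have "bnb m (dig m i t) t p = bnb m (dig m i t) t p'" using pp Bn by simp
      then show ?thesis using bnb_inj[OF m0] pp Bn by simp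
    qed
  qed
qed (auto simp: inj_on_def split: if_splits)

end



lemma rport_eq:
  assumes "q < deg G (nbr G v p)" "nbr G (nbr G v p) q = v"
    "inj_on (nbr G (nbr G v p)) {..<deg G (nbr G v p)}"
  shows "rport G v p = q"
  unfolding rport_def
proof (rule the_equality)
  show "q < deg G (nbr G v p) \<and> nbr G (nbr G v p) q = v" using assms by simp
next
  fix q' assume "q' < deg G (nbr G v p) \<and> nbr G (nbr G v p) q' = v"
  then show "q' = q" using assms inj_onD[OF assms(3)] by auto
qed

definition VW :: "nat \<Rightarrow> nd \<Rightarrow> view" where
  "VW m x = Node (map (\<lambda>p. (p, rportN m x p, Leaf (dN m x p))) [0..<degN m x])"

context
  fixes m :: nat and \<rho> :: "nat \<Rightarrow> nat"
  assumes m3: "3 \<le> m" and perm: "\<rho> permutes {..<KK m}"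
begin

lemma Gr_simps: "nv (Gr m \<rho>) = NN m" "deg (Gr m \<rho>) v = degN m (dec m v)"
  "nbr (Gr m \<rho>) v p = enc m (nbrN m \<rho> (dec m v) p)"
  by (simp_all add: Gr_def)

lemma G_inj: assumes v: "v < NN m" shows "inj_on (nbr (Gr m \<rho>) v) {..<deg (Gr m \<rho>) v}"
proof -
  have x: "valid m (dec m v)" using dec_valid v by auto
  show ?thesis unfolding inj_on_def
  proof (intro ballI impI)
    fix p p' assume pp: "p \<in> {..<deg (Gr m \<rho>) v}" "p' \<in> {..<deg (Gr m \<rho>) v}"
      "nbr (Gr m \<rho>) v p = nbr (Gr m \<rho>) v p'"
    have a: "p < degN m (dec m v)" "p' < degN m (dec m v)" using pp by (auto simp: Gr_simps)
    have "nbrN m \<rho> (dec m v) p = nbrN m \<rho> (dec m v) p'"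
      using enc_inj[of m "nbrN m \<rho> (dec m v) p" "nbrN m \<rho> (dec m v) p'"] nbr_props[OF m3 perm x a(1)] nbr_props[OF m3 perm x a(2)] pp(3) by (simp add: Gr_simps)
    then show "p = p'" using inj_onD[OF nbr_inj[OF m3 perm x]] a by simp
  qed
qed

lemma G_nbr:
  assumes v: "v < NN m" and p: "p < deg (Gr m \<rho>) v"
  shows "nbr (Gr m \<rho>) v p < NN m \<and> nbr (Gr m \<rho>) v p \<noteq> v
    \<and> rport (Gr m \<rho>) v p = rportN m (dec m v) p
    \<and> deg (Gr m \<rho>) (nbr (Gr m \<rho>) v p) = dN m (dec m v) p
    \<and> dec m (nbr (Gr m \<rho>) v p) = nbrN m \<rho> (dec m v) p"
proof -
  define x where "x = dec m v"
  have x: "valid m x" "enc m x = v" using dec_valid[OF v] x_def by auto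
  have px: "p < degN m x" using p x_def by (simp add: Gr_simps)
  note P = nbr_props[OF m3 perm x(1) px]
  define y where "y = nbrN m \<rho> x p"
  have y: "valid m y" using P y_def by simp
  have ny: "nbr (Gr m \<rho>) v p = enc m y" using x_def y_def by (simp add: Gr_simps)
  have dy: "dec m (enc m y) = y" using dec_enc[OF y] .
  have r: "rport (Gr m \<rho>) v p = rportN m x p"
  proof (rule rport_eq)
    show "rportN m x p < deg (Gr m \<rho>) (nbr (Gr m \<rho>) v p)" using P ny dy y_def by (simp add: Gr_simps)
    show "nbr (Gr m \<rho>) (nbr (Gr m \<rho>) v p) (rportN m x p) = v" using P ny dy y_def x by (simp add: Gr_simps)
    show "inj_on (nbr (Gr m \<rho>) (nbr (Gr m \<rho>) v p)) {..<deg (Gr m \<rho>) (nbr (Gr m \<rho>) v p)}"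
      using G_inj[of "nbr (Gr m \<rho>) v p"] enc_lt[OF y] ny by simp
  qed
  have "enc m y \<noteq> v" using P y_def x enc_inj[OF y x(1)] by auto
  then show ?thesis using enc_lt[OF y] ny r P y_def dy x_def by (simp add: Gr_simps)
qed

lemma edge_in: assumes "valid m x" "p < degN m x"
  shows "(enc m x, enc m (nbrN m \<rho> x p)) \<in> edge_rel (Gr m \<rho>)"
  using assms enc_lt[OF assms(1)] dec_enc[OF assms(1)] unfolding edge_rel_def by (auto simp: Gr_simps)

lemma reach_hub: assumes "valid m x"
  shows "(0, enc m x) \<in> (edge_rel (Gr m \<rho>))\<^sup>* \<and> (enc m x, 0) \<in> (edge_rel (Gr m \<rho>))\<^sup>*"
proof -
  let ?E = "edge_rel (Gr m \<rho>)"
  have con: "(0, enc m (Con j)) \<in> ?E \<and> (enc m (Con j), 0) \<in> ?E" if "j < KK m" for j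
    using edge_in[of Hub j] edge_in[of "Con j" 0] that by simp
  have an: "(enc m (Con (\<rho> i)), enc m (An i)) \<in> ?E \<and> (enc m (An i), enc m (Con (\<rho> i))) \<in> ?E" if "i < KK m" for i
    using edge_in[of "Con (\<rho> i)" 1] edge_in[of "An i" 0] that rho_lt[OF m3 perm] inv_rho[OF m3 perm] by simp
  have an2: "(0, enc m (An i)) \<in> ?E\<^sup>* \<and> (enc m (An i), 0) \<in> ?E\<^sup>*" if "i < KK m" for i
    using con[of "\<rho> i"] an[of i] that rho_lt[OF m3 perm]
    by (meson converse_rtrancl_into_rtrancl r_into_rtrancl rtrancl_trans)
  show ?thesis
  proof (cases x)
    case Hub then show ?thesis by simp
  next
    case (Con j) then show ?thesis using con assms by auto
  next
    case (An i) then show ?thesis using an2 assms by auto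
  next
    case (Bn i t)
    have it: "i < KK m" "t < m" using assms Bn by auto
    have "(enc m (An i), enc m (Bn i t)) \<in> ?E" using edge_in[of "An i" "Suc t"] it by simp
    moreover have "(enc m (Bn i t), enc m (An i)) \<in> ?E" using edge_in[of "Bn i t" "dig m i t"] it dig_lt[of m] m3 by simp
    ultimately show ?thesis using an2[OF it(1)] Bn
      by (meson rtrancl_into_rtrancl converse_rtrancl_into_rtrancl)
  qed
qed

lemma wf: "wf_pgraph (Gr m \<rho>)"
  unfolding wf_pgraph_def
proof (intro conjI allI impI)
  show "1 \<le> nv (Gr m \<rho>)" by (simp add: Gr_simps NN_def)
next
  fix v p assume "v < nv (Gr m \<rho>)" "p < deg (Gr m \<rho>) v"
  then show "nbr (Gr m \<rho>) v p < nv (Gr m \<rho>)" "nbr (Gr m \<rho>) v p \<noteq> v"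
    using G_nbr by (auto simp: Gr_simps)
next
  fix v assume v: "v < nv (Gr m \<rho>)"
  have x: "valid m (dec m v)" using dec_valid v by (simp add: Gr_simps)
  show "inj_on (nbr (Gr m \<rho>) v) {..<deg (Gr m \<rho>) v}"
    using G_inj v by (simp add: Gr_simps)
next
  fix v p assume v: "v < nv (Gr m \<rho>)" and p: "p < deg (Gr m \<rho>) v"
  have v': "v < NN m" using v by (simp add: Gr_simps)
  note G = G_nbr[OF v' p]
  have x: "valid m (dec m v)" "enc m (dec m v) = v" using dec_valid v' by auto
  have pp: "p < degN m (dec m v)" using p by (simp add: Gr_simps)
  note P = nbr_props[OF m3 perm x(1) pp]
  show "\<exists>q < deg (Gr m \<rho>) (nbr (Gr m \<rho>) v p). nbr (Gr m \<rho>) (nbr (Gr m \<rho>) v p) q = v"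
    apply (rule exI[of _ "rportN m (dec m v) p"])
    using G P x by (simp add: Gr_simps)
next
  fix u v assume u: "u < nv (Gr m \<rho>)" and v: "v < nv (Gr m \<rho>)"
  have "(u, 0) \<in> (edge_rel (Gr m \<rho>))\<^sup>*" using reach_hub[of "dec m u"] dec_valid[of u m] u by (auto simp: Gr_simps)
  moreover have "(0, v) \<in> (edge_rel (Gr m \<rho>))\<^sup>*" using reach_hub[of "dec m v"] dec_valid[of v m] v by (auto simp: Gr_simps)
  ultimately show "(u, v) \<in> (edge_rel (Gr m \<rho>))\<^sup>*" by simp
qed

lemma bview1: assumes v: "v < NN m" shows "bview (Gr m \<rho>) 1 v = VW m (dec m v)"
proof -
  have "bview (Gr m \<rho>) 1 v = Node (map (\<lambda>p. (p, rport (Gr m \<rho>) v p, Leaf (deg (Gr m \<rho>) (nbr (Gr m \<rho>) v p)))) [0..<deg (Gr m \<rho>) v])"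
    by (simp add: numeral_eq_Suc)
  also have "\<dots> = VW m (dec m v)" unfolding VW_def
  proof (simp only: Gr_simps(2)[of v] view.inject, rule map_cong)
    fix p assume "p \<in> set [0..<degN m (dec m v)]"
    then have "p < deg (Gr m \<rho>) v" by (simp add: Gr_simps)
    note G = G_nbr[OF v this]
    show "(p, rport (Gr m \<rho>) v p, Leaf (deg (Gr m \<rho>) (nbr (Gr m \<rho>) v p))) = (p, rportN m (dec m v) p, Leaf (dN m (dec m v) p))"
      using G by simp
  qed simp
  finally show ?thesis .
qed

end



lemma digits_inj: "i < m ^ n \<Longrightarrow> i' < m ^ n \<Longrightarrow> (\<forall>t<n. dig m i t = dig m i' t) \<Longrightarrow> i = i'"
proof (induction n arbitrary: i i')
  case 0 then show ?case by simp
next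
  case (Suc n)
  have m: "0 < m" using Suc.prems(1) by (cases "m = 0") auto
  have a: "i div m < m ^ n" "i' div m < m ^ n" using Suc.prems(1,2)
    by (simp_all add: less_mult_imp_div_less mult.commute)
  have "\<forall>t<n. dig m (i div m) t = dig m (i' div m) t"
  proof (intro allI impI)
    fix t assume "t < n"
    then have "dig m i (Suc t) = dig m i' (Suc t)" using Suc.prems(3) by simp
    then show "dig m (i div m) t = dig m (i' div m) t" by (simp add: dig_def div_mult2_eq)
  qed
  then have "i div m = i' div m" using Suc.IH a by blast
  moreover have "i mod m = i' mod m" using Suc.prems(3)[rule_format, of 0] by (simp add: dig_def)
  ultimately show ?case by (metis mod_div_mult_eq)
qed

lemma VW_eq: assumes "VW m x = VW m y"
  shows "degN m x = degN m y \<and> (\<forall>p<degN m x. rportN m x p = rportN m y p \<and> dN m x p = dN m y p)"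
proof -
  let ?f = "\<lambda>x p. (p, rportN m x p, Leaf (dN m x p))"
  have e: "map (?f x) [0..<degN m x] = map (?f y) [0..<degN m y]" using assms by (simp add: VW_def)
  have "length (map (?f x) [0..<degN m x]) = length (map (?f y) [0..<degN m y])" using e by (rule arg_cong)
  then have l: "degN m x = degN m y" by (simp only: length_map length_upt diff_zero)
  have "\<forall>p<degN m x. ?f x p = ?f y p"
  proof (intro allI impI)
    fix p assume p: "p < degN m x"
    have "map (?f x) [0..<degN m x] ! p = map (?f y) [0..<degN m y] ! p" using e by (rule arg_cong)
    then show "?f x p = ?f y p" using p l by (simp only: nth_map length_upt diff_zero nth_upt add_0)
  qed
  then show ?thesis using l by simp
qed

lemma VW_inj: assumes m3: "3 \<le> m" and x: "valid m x" and y: "valid m y" and e: "VW m x = VW m y"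
  shows "x = y"
proof -
  have m0: "0 < m" using m3 by simp
  note E = VW_eq[OF e]
  have dg: "degN m x = degN m y" using E by blast
  have E2: "\<And>p. p < degN m x \<Longrightarrow> rportN m x p = rportN m y p \<and> dN m x p = dN m y p" using E by blast
  have K: "m + 2 \<le> KK m" using KK_big[OF m3] .
  show ?thesis
  proof (cases x)
    case Hub then show ?thesis using dg K m3 by (cases y) auto
  next
    case (Con j)
    then obtain j' where y': "y = Con j'" using dg K m3 by (cases y) auto
    have "rportN m x 0 = rportN m y 0" using E2[of 0] Con by simp
    then show ?thesis using Con y' by simp
  next
    case (An i)
    then obtain i' where y': "y = An i'" using dg K m3 by (cases y) auto
    have "\<forall>t<m. dig m i t = dig m i' t"
    proof (intro allI impI)
      fix t assume "t < m"
      then have "rportN m x (Suc t) = rportN m y (Suc t)" using E2[of "Suc t"] An by simp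
      then show "dig m i t = dig m i' t" using An y' by simp
    qed
    then show ?thesis using digits_inj[of i m m i'] x y An y' by (simp add: KK_def)
  next
    case (Bn i t)
    then obtain i' t' where y': "y = Bn i' t'" using dg K m3 by (cases y) auto
    have it: "i < KK m" "t < m" "i' < KK m" "t' < m" using x y Bn y' by auto
    define d where "d = dig m i t"
    have d: "d < m" using dig_lt[OF m0] d_def by simp
    have "dN m x d = dN m y d" using E2[of d] Bn d by simp
    then have "dN m y d = m + 1" using Bn d_def by simp
    then have dd: "dig m i' t' = d" using y' by (auto split: if_splits)
    have "rportN m x d = rportN m y d" using E2[of d] Bn d by simp
    then have tt: "t = t'" using Bn y' d_def dd by simp
    have "\<forall>l<m. dig m i l = dig m i' l"
    proof (intro allI impI)
      fix l assume l: "l < m"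
      show "dig m i l = dig m i' l"
      proof (cases "l = t")
        case True then show ?thesis using dd tt d_def by simp
      next
        case False
        define p where "p = bport m d t l"
        have p: "p < m" using bport_lt[OF m0] p_def by simp
        have pd: "p \<noteq> d" using bport_eq_d[OF m0 l d it(2)] False p_def by simp
        have bl: "bnb m d t p = l" using bnb_bport[OF m0 l] p_def by simp
        have "rportN m x p = rportN m y p" using E2[of p] Bn p by simp
        then have "bport m (dig m i l) l t = bport m (dig m i' l) l t"
          using Bn y' pd bl d_def dd tt by simp
        then show ?thesis using bport_inj_d[OF m0 dig_lt[OF m0] dig_lt[OF m0]] by blast
      qed
    qed
    then have "i = i'" using digits_inj[of i m m i'] it by (simp add: KK_def)
    then show ?thesis using Bn y' tt by simp
  qed
qed

context
  fixes m :: nat and \<rho> :: "nat \<Rightarrow> nat"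
  assumes m3: "3 \<le> m" and perm: "\<rho> permutes {..<KK m}"
begin

lemma inj1: "inj_on (bview (Gr m \<rho>) 1) (verts (Gr m \<rho>))"
proof (rule inj_onI)
  fix u v assume u: "u \<in> verts (Gr m \<rho>)" and v: "v \<in> verts (Gr m \<rho>)"
    and e: "bview (Gr m \<rho>) 1 u = bview (Gr m \<rho>) 1 v"
  have u': "u < NN m" and v': "v < NN m" using u v by (auto simp: verts_def Gr_simps[OF m3 perm])
  have "VW m (dec m u) = VW m (dec m v)" using e bview1[OF m3 perm u'] bview1[OF m3 perm v'] by simp
  then have "dec m u = dec m v" using VW_inj[OF m3] dec_valid u' v' by blast
  then show "u = v" using dec_valid u' v' by metis
qed

lemma not_inj0: "\<not> inj_on (bview (Gr m \<rho>) 0) (verts (Gr m \<rho>))"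
proof
  assume h: "inj_on (bview (Gr m \<rho>) 0) (verts (Gr m \<rho>))"
  have K: "0 < KK m" using KK_big[OF m3] by simp
  have v1: "valid m (Bn 0 0)" "valid m (Bn 0 1)" using K m3 by auto
  have a: "enc m (Bn 0 0) \<in> verts (Gr m \<rho>)" "enc m (Bn 0 1) \<in> verts (Gr m \<rho>)"
    using enc_lt[OF v1(1)] enc_lt[OF v1(2)] by (auto simp: verts_def Gr_simps[OF m3 perm])
  have "bview (Gr m \<rho>) 0 (enc m (Bn 0 0)) = bview (Gr m \<rho>) 0 (enc m (Bn 0 1))"
    using dec_enc[OF v1(1)] dec_enc[OF v1(2)] by (simp add: Gr_simps[OF m3 perm])
  then have "enc m (Bn 0 0) = enc m (Bn 0 1)" using inj_onD[OF h] a by blast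
  then show False by simp
qed

lemma feas: "feasible (Gr m \<rho>)" using inj1 unfolding feasible_def by blast

lemma eidx: "election_index (Gr m \<rho>) = 1"
  unfolding election_index_def
proof (rule Least_equality)
  show "inj_on (bview (Gr m \<rho>) 1) (verts (Gr m \<rho>))" by (rule inj1)
next
  fix y assume "inj_on (bview (Gr m \<rho>) y) (verts (Gr m \<rho>))"
  then show "1 \<le> y" using not_inj0 by (cases y) auto
qed

end



lemma walk_hd: "walk G u s = Some vs \<Longrightarrow> vs \<noteq> [] \<and> hd vs = u"
  by (induction G u s arbitrary: vs rule: walk.induct) (auto split: if_splits)

lemma walk_cons: "walk G u (p # q # rest) = Some vs \<Longrightarrow>
  p < deg G u \<and> rport G u p = q \<and> (\<exists>vs'. walk G (nbr G u p) rest = Some vs' \<and> vs = u # vs')"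
  by (auto split: if_splits)

lemma walk_single: "walk G u [p] = Some vs \<Longrightarrow> False" by simp

lemma walk_last_ne: assumes "walk G u s = Some vs" "s \<noteq> []" "distinct vs" shows "last vs \<noteq> u"
proof -
  obtain p q rest where s: "s = p # q # rest" using assms(1,2)
    by (metis list.exhaust walk_single)
  obtain vs' where w: "walk G (nbr G u p) rest = Some vs'" "vs = u # vs'" using walk_cons assms(1) s by blast
  have "vs' \<noteq> []" using walk_hd[OF w(1)] by simp
  then have "last vs = last vs'" "last vs' \<in> set vs'" using w(2) by auto
  moreover have "u \<notin> set vs'" using assms(3) w(2) by simp
  ultimately show ?thesis by auto
qed


lemma walk_stay:
  assumes S: "\<forall>y\<in>S. \<forall>p<deg G y. nbr G y p \<in> S \<or> nbr G y p = a"
  shows "walk G x s = Some vs \<Longrightarrow> x \<in> S \<Longrightarrow> a \<notin> set vs \<Longrightarrow> set vs \<subseteq> S"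
proof (induction s arbitrary: x vs rule: length_induct)
  case (1 s)
  show ?case
  proof (cases s)
    case Nil then show ?thesis using 1 by auto
  next
    case (Cons p s1)
    then obtain q rest where s: "s = p # q # rest" using 1(2) by (cases s1) auto
    obtain vs' where w: "walk G (nbr G x p) rest = Some vs'" "vs = x # vs'" "p < deg G x"
      using walk_cons 1(2) s by blast
    have h: "hd vs' = nbr G x p" "vs' \<noteq> []" using walk_hd[OF w(1)] by auto
    have "nbr G x p \<noteq> a" using h 1(4) w(2) by (metis hd_in_set list.set_intros(2))
    then have "nbr G x p \<in> S" using S 1(3) w(3) by blast
    moreover have "length rest < length s" using s by simp
    moreover have "a \<notin> set vs'" using 1(4) w(2) by simp
    ultimately have "set vs' \<subseteq> S" using 1(1) w(1) by blast
    then show ?thesis using w(2) 1(3) by simp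
  qed
qed

definition inblock :: "nat \<Rightarrow> nat \<Rightarrow> nat \<Rightarrow> bool" where
  "inblock m i l \<longleftrightarrow> l < NN m \<and> (dec m l = An i \<or> (\<exists>t. dec m l = Bn i t))"

context
  fixes m :: nat and \<rho> :: "nat \<Rightarrow> nat"
  assumes m3: "3 \<le> m" and perm: "\<rho> permutes {..<KK m}"
begin


lemma Ai_out:
  assumes i: "i < KK m" and w: "walk (Gr m \<rho>) (enc m (An i)) s = Some vs" and d: "distinct vs"
    and l: "last vs = l" and nb: "\<not> inblock m i l"
  shows "(s = [0, 1] \<and> l = enc m (Con (\<rho> i))) \<or> (\<exists>q r. s = 0 # q # 0 # \<rho> i # r)"
proof -
  let ?G = "Gr m \<rho>"
  define v where "v = enc m (An i)"
  have vx: "valid m (An i)" using i by simp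
  have vN: "v < NN m" using enc_lt[OF vx] v_def by simp
  have dv: "dec m v = An i" using dec_enc[OF vx] v_def by simp
  have "s \<noteq> []"
  proof
    assume "s = []"
    then have "vs = [v]" using w v_def by simp
    then have "l = v" using l by simp
    then show False using nb vN dv unfolding inblock_def by simp
  qed
  then obtain p q rest where s: "s = p # q # rest" using w
    by (metis list.exhaust walk_single)
  obtain vs' where w': "walk ?G (nbr ?G v p) rest = Some vs'" "vs = v # vs'" "p < deg ?G v" "rport ?G v p = q"
    using walk_cons w s v_def by blast
  have vs'ne: "vs' \<noteq> []" and hd': "hd vs' = nbr ?G v p" using walk_hd[OF w'(1)] by auto
  have lv': "l = last vs'" using l w'(2) vs'ne by simp
  have p0: "p = 0"
  proof (rule ccontr)
    assume p0: "p \<noteq> 0"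
    define S where "S = {y. y < NN m \<and> (\<exists>t. dec m y = Bn i t)}"
    have SS: "\<forall>y\<in>S. \<forall>p<deg ?G y. nbr ?G y p \<in> S \<or> nbr ?G y p = v"
    proof (intro ballI allI impI)
      fix y p assume y: "y \<in> S" and p: "p < deg ?G y"
      then obtain t where t: "dec m y = Bn i t" "y < NN m" unfolding S_def by auto
      have tm: "t < m" using dec_valid[OF t(2)] t by simp
      show "nbr ?G y p \<in> S \<or> nbr ?G y p = v"
      proof (cases "p = dig m i t")
        case True then show ?thesis using t v_def by (simp add: Gr_simps[OF m3 perm])
      next
        case False
        have vb: "valid m (Bn i (bnb m (dig m i t) t p))" using i bnb_lt[of m] m3 by simp
        show ?thesis using False t vb enc_lt[OF vb] dec_enc[OF vb] unfolding S_def by (simp add: Gr_simps[OF m3 perm])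
      qed
    qed
    have vb: "valid m (Bn i (p - 1))" using i w'(3) p0 dv by (simp add: Gr_simps[OF m3 perm])
    have "nbr ?G v p = enc m (Bn i (p - 1))" using dv p0 by (simp add: Gr_simps[OF m3 perm])
    then have inS: "nbr ?G v p \<in> S" using enc_lt[OF vb] dec_enc[OF vb] unfolding S_def by auto
    have "v \<notin> set vs'" using d w'(2) by simp
    then have "set vs' \<subseteq> S" using walk_stay[OF SS w'(1) inS] by simp
    then have "l \<in> S" using lv' vs'ne by auto
    then show False using nb unfolding S_def inblock_def by auto
  qed
  have q1: "q = 1" using w'(4) p0 G_nbr[OF m3 perm vN, of 0] w'(3) dv by simp
  define c where "c = enc m (Con (\<rho> i))"
  have vc: "valid m (Con (\<rho> i))" using rho_lt[OF m3 perm i] by simp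
  have cN: "c < NN m" using enc_lt[OF vc] c_def by simp
  have dc: "dec m c = Con (\<rho> i)" using dec_enc[OF vc] c_def by simp
  have nvc: "nbr ?G v p = c" using p0 dv c_def by (simp add: Gr_simps[OF m3 perm])
  show ?thesis
  proof (cases rest)
    case Nil
    then have "vs' = [c]" using w'(1) nvc by simp
    then show ?thesis using lv' s p0 q1 Nil c_def by simp
  next
    case (Cons p2 rest1)
    then obtain q2 r where r: "rest = p2 # q2 # r" using w'(1) by (cases rest1) auto
    obtain vs'' where w'': "walk ?G (nbr ?G c p2) r = Some vs''" "vs' = c # vs''" "p2 < deg ?G c" "rport ?G c p2 = q2"
      using walk_cons w'(1) r nvc by metis
    have p2: "p2 = 0"
    proof (rule ccontr)
      assume "p2 \<noteq> 0"
      then have "p2 = 1" using w''(3) dc by (simp add: Gr_simps[OF m3 perm])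
      then have "nbr ?G c p2 = v" using dc v_def inv_rho[OF m3 perm] by (simp add: Gr_simps[OF m3 perm])
      then have "v \<in> set vs''" using walk_hd[OF w''(1)] by (metis hd_in_set)
      then show False using d w'(2) w''(2) by simp
    qed
    have "q2 = \<rho> i" using w''(4) p2 G_nbr[OF m3 perm cN, of 0] w''(3) dc by simp
    then show ?thesis using s p0 r p2 by simp
  qed
qed

end

lemma perm_eq_but_one:
  assumes p1: "\<rho> permutes S" and p2: "\<rho>' permutes S" and eq: "\<forall>i\<in>S. i \<noteq> i0 \<longrightarrow> \<rho> i = \<rho>' i"
  shows "\<rho> = \<rho>'"
proof
  fix x
  show "\<rho> x = \<rho>' x"
  proof (cases "x \<in> S \<and> x = i0")
    case False
    show ?thesis
    proof (cases "x \<in> S")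
      case True then show ?thesis using False eq by blast
    next
      case nS: False
      show ?thesis using permutes_not_in[OF p1 nS] permutes_not_in[OF p2 nS] by simp
    qed
  next
    case True
    show ?thesis
    proof (rule ccontr)
      assume ne: "\<rho> x \<noteq> \<rho>' x"
      have "\<rho>' x \<in> S" using True permutes_in_image[OF p2, of x] by blast
      define y where "y = inv \<rho> (\<rho>' x)"
      have y: "y \<in> S" "\<rho> y = \<rho>' x"
        using permutes_in_image[OF permutes_inv[OF p1], of "\<rho>' x"] \<open>\<rho>' x \<in> S\<close> permutes_inverses(1)[OF p1] y_def by auto
      have "y \<noteq> x" using y ne by auto
      then have "\<rho>' y = \<rho>' x" using eq y True by auto
      then have "y = x" using permutes_inj[OF p2] by (simp add: inj_eq)
      then show False using \<open>y \<noteq> x\<close> by simp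
    qed
  qed
qed

lemma incompat:
  assumes m3: "3 \<le> m" and pr: "\<rho> permutes {..<KK m}" and pr': "\<rho>' permutes {..<KK m}"
    and e1: "elects (Gr m \<rho>) out" and e2: "elects (Gr m \<rho>') out'" and eo: "\<forall>v<NN m. out v = out' v"
  shows "\<rho> = \<rho>'"
proof -
  have V1: "verts (Gr m \<rho>) = {..<NN m}" by (simp add: verts_def Gr_simps[OF m3 pr])
  have V2: "verts (Gr m \<rho>') = {..<NN m}" by (simp add: verts_def Gr_simps[OF m3 pr'])
  obtain l1 where l1: "l1 < NN m" "\<forall>v<NN m. \<exists>vs. walk (Gr m \<rho>) v (out v) = Some vs \<and> distinct vs \<and> last vs = l1"
    using e1 V1 unfolding elects_def by auto
  obtain l2 where l2: "l2 < NN m" "\<forall>v<NN m. \<exists>vs. walk (Gr m \<rho>') v (out' v) = Some vs \<and> distinct vs \<and> last vs = l2"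
    using e2 V2 unfolding elects_def by auto
  have o2: "out l2 = []"
  proof (rule ccontr)
    assume "out l2 \<noteq> []"
    moreover obtain vs where "walk (Gr m \<rho>') l2 (out' l2) = Some vs" "distinct vs" "last vs = l2" using l2 by blast
    ultimately show False using walk_last_ne eo l2(1) by metis
  qed
  have "l1 = l2" using l1(2)[rule_format, OF l2(1)] o2 by auto
  then have L: "\<forall>v<NN m. \<exists>vs. walk (Gr m \<rho>) v (out v) = Some vs \<and> distinct vs \<and> last vs = l2"
    "\<forall>v<NN m. \<exists>vs. walk (Gr m \<rho>') v (out v) = Some vs \<and> distinct vs \<and> last vs = l2"
    using l1 l2 eo by auto
  have agree: "\<rho> i = \<rho>' i" if i: "i < KK m" and nb: "\<not> inblock m i l2" for i
  proof -
    have vx: "valid m (An i)" using i by simp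
    have vN: "enc m (An i) < NN m" using enc_lt[OF vx] .
    obtain vs where a: "walk (Gr m \<rho>) (enc m (An i)) (out (enc m (An i))) = Some vs" "distinct vs" "last vs = l2"
      using L(1) vN by blast
    obtain vs' where b: "walk (Gr m \<rho>') (enc m (An i)) (out (enc m (An i))) = Some vs'" "distinct vs'" "last vs' = l2"
      using L(2) vN by blast
    note A = Ai_out[OF m3 pr i a nb] and B = Ai_out[OF m3 pr' i b nb]
    show ?thesis using A B by auto
  qed
  have "\<exists>i0. \<forall>i\<in>{..<KK m}. i \<noteq> i0 \<longrightarrow> \<rho> i = \<rho>' i"
  proof (cases "\<exists>i0. inblock m i0 l2")
    case True
    then obtain i0 where i0: "inblock m i0 l2" by blast
    have "\<forall>i\<in>{..<KK m}. i \<noteq> i0 \<longrightarrow> \<rho> i = \<rho>' i"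
    proof (intro ballI impI)
      fix i assume "i \<in> {..<KK m}" "i \<noteq> i0"
      moreover have "\<not> inblock m i l2" using i0 \<open>i \<noteq> i0\<close> by (auto simp: inblock_def)
      ultimately show "\<rho> i = \<rho>' i" using agree by simp
    qed
    then show ?thesis by blast
  next
    case False
    then show ?thesis using agree by auto
  qed
  then obtain i0 where "\<forall>i\<in>{..<KK m}. i \<noteq> i0 \<longrightarrow> \<rho> i = \<rho>' i" by blast
  then show ?thesis using perm_eq_but_one[OF pr pr'] by blast
qed




lemma card_short_lists:
  assumes "A \<subseteq> {xs :: bool list. length xs < L}"
  shows "card A < 2 ^ L"
proof -
  have eq: "{xs :: bool list. length xs < L} = (\<Union>n<L. {xs. set xs \<subseteq> UNIV \<and> length xs = n})" by auto
  have fin: "finite {xs :: bool list. length xs < L}" unfolding eq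
  proof (intro finite_UN_I)
    fix n show "finite {xs :: bool list. set xs \<subseteq> UNIV \<and> length xs = n}"
      by (rule finite_lists_length_eq) simp
  qed simp
  have "card A \<le> card {xs :: bool list. length xs < L}" using card_mono[OF fin assms] .
  also have "\<dots> \<le> (\<Sum>n<L. card {xs :: bool list. set xs \<subseteq> UNIV \<and> length xs = n})"
    unfolding eq by (rule card_UN_le) simp
  also have "\<dots> = (\<Sum>n<L. 2 ^ n)"
  proof -
    have c: "\<And>n. card {xs::bool list. length xs = n} = 2^n" using card_lists_length_eq[of "UNIV::bool set"] by simp
    show ?thesis by (simp add: c)
  qed
  also have "\<dots> < 2 ^ L" by (induction L) auto
  finally show ?thesis .
qed

lemma fact_lower: "(a + 1) ^ b \<le> fact (a + b)"
proof (induction b)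
  case 0 then show ?case by simp
next
  case (Suc b)
  have "(a + 1) ^ Suc b = (a + 1) * (a + 1) ^ b" by simp
  also have "\<dots> \<le> (a + b + 1) * fact (a + b)" using Suc by (intro mult_mono) auto
  also have "\<dots> = fact (a + Suc b)" by simp
  finally show ?case .
qed

lemma log_fact_lower:
  assumes m3: "3 \<le> m"
  shows "real (KK m) * real m * log 2 (real m) / 3 \<le> log 2 (real (fact (KK m)))"
proof -
  define K where "K = KK m"
  define a where "a = K div 2"
  define b where "b = K - K div 2"
  have K: "K = m ^ m" unfolding K_def KK_def by simp
  have Kpos: "K > 0" using K m3 by simp
  have "(a + 1) ^ b \<le> fact K" using fact_lower[of a b] unfolding a_def b_def by simp
  then have f: "real ((a + 1) ^ b) \<le> real (fact K)" by linarith
  have a: "real K / 2 \<le> real (a + 1)" unfolding a_def by linarith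
  have b: "real K / 2 \<le> real b" unfolding b_def by linarith
  have lK: "log 2 (real K) = real m * log 2 (real m)" unfolding K using m3 by (simp add: log_nat_power)
  have lm: "1 \<le> log 2 (real m)" using m3 by simp
  have "real m * 1 \<le> real m * log 2 (real m)" by (rule mult_left_mono[OF lm]) simp
  then have mlm: "3 \<le> real m * log 2 (real m)" using m3 by linarith
  have "log 2 (real K / 2) = real m * log 2 (real m) - 1" using Kpos lK by (simp add: log_divide)
  then have l2: "2 / 3 * (real m * log 2 (real m)) \<le> log 2 (real K / 2)" using mlm by linarith
  have "log 2 (real K / 2) \<le> log 2 (real (a + 1))" using a Kpos by simp
  then have "real K / 2 * log 2 (real K / 2) \<le> real b * log 2 (real (a + 1))"
    using b l2 mlm by (intro mult_mono) auto
  also have "\<dots> = log 2 (real ((a + 1) ^ b))" by (simp add: log_nat_power)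
  also have "\<dots> \<le> log 2 (real (fact K))" using f by simp
  finally have "real K / 2 * log 2 (real K / 2) \<le> log 2 (real (fact K))" .
  moreover have "real K * real m * log 2 (real m) / 3 \<le> real K / 2 * log 2 (real K / 2)"
  proof -
    have "real K / 2 * (2 / 3 * (real m * log 2 (real m))) \<le> real K / 2 * log 2 (real K / 2)"
      using l2 by (intro mult_left_mono) auto
    then show ?thesis by (simp add: field_simps)
  qed
  ultimately show ?thesis unfolding K_def by linarith
qed

lemma NN_le: assumes m3: "3 \<le> m" shows "NN m \<le> 2 * m * KK m" "NN m \<le> 2 ^ (m ^ 3)"
proof -
  have K: "1 \<le> KK m" using KK_big[OF m3] by simp
  have "NN m \<le> KK m * (m + 3)" unfolding NN_def using K by (simp add: algebra_simps)
  also have "\<dots> \<le> KK m * (2 * m)" using m3 by (intro mult_left_mono) auto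
  finally show a: "NN m \<le> 2 * m * KK m" by (simp add: algebra_simps)
  have "2 * m * KK m \<le> m * m * m ^ m" using m3 unfolding KK_def by (intro mult_right_mono) auto
  also have "\<dots> = m ^ (m + 2)" by (simp add: power_add power2_eq_square)
  also have "\<dots> \<le> (2 ^ m) ^ (m + 2)" by (intro power_mono) (auto intro: less_exp[THEN less_imp_le])
  also have "\<dots> = 2 ^ (m * (m + 2))" by (rule power_mult[symmetric])
  also have "\<dots> \<le> 2 ^ (m ^ 3)"
  proof (rule power_increasing)
    have "3 * m \<le> m * m" using mult_le_mono1[OF m3] by simp
    then have "m + 2 \<le> m * m" using m3 by linarith
    then have "m * (m + 2) \<le> m * (m * m)" by (rule mult_left_mono) simp
    then show "m * (m + 2) \<le> m ^ 3" by (simp add: power3_eq_cube)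
  qed simp
  finally show "NN m \<le> 2 ^ (m ^ 3)" using a by linarith
qed




lemma bound:
  assumes m3: "3 \<le> m"
  shows "1 / 48 * real (NN m) * log 2 (log 2 (real (NN m))) + 1 \<le> log 2 (real (fact (KK m)))"
proof -
  define n where "n = NN m"
  define K where "K = KK m"
  have n1: "NN m \<le> 2 * m * KK m" "NN m \<le> 2 ^ (m ^ 3)" using NN_le[OF m3] by auto
  have n2: "2 \<le> n" unfolding n_def NN_def using KK_big[OF m3] by simp
  have ln: "log 2 (real n) \<le> real (m ^ 3)"
  proof -
    have "real n \<le> 2 ^ (m ^ 3)" using n1(2) unfolding n_def by (metis of_nat_le_iff of_nat_numeral of_nat_power)
    then have "log 2 (real n) \<le> log 2 (2 ^ (m ^ 3))" using n2 by (intro log_mono) auto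
    then show ?thesis by (simp add: log_nat_power)
  qed
  have lnpos: "1 \<le> log 2 (real n)" using n2 by simp
  have lln: "log 2 (log 2 (real n)) \<le> 3 * log 2 (real m)"
  proof -
    have "log 2 (log 2 (real n)) \<le> log 2 (real (m ^ 3))" using ln lnpos by (intro log_mono) auto
    then show ?thesis using m3 by (simp add: log_nat_power)
  qed
  have lm: "0 \<le> log 2 (real m)" using m3 by simp
  have nK: "real n \<le> 2 * real m * real K" using n1(1) unfolding n_def K_def by (metis of_nat_le_iff of_nat_mult of_nat_numeral)
  have "real n * log 2 (log 2 (real n)) \<le> real n * (3 * log 2 (real m))"
    using lln by (intro mult_left_mono) auto
  also have "\<dots> \<le> (2 * real m * real K) * (3 * log 2 (real m))"
    using nK lm by (intro mult_right_mono) auto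
  finally have A: "real n * log 2 (log 2 (real n)) \<le> 6 * (real K * real m * log 2 (real m))" by (simp add: algebra_simps)
  have B: "real K * real m * log 2 (real m) / 3 \<le> log 2 (real (fact K))" using log_fact_lower[OF m3] K_def by simp
  have K27: "27 \<le> real K"
  proof -
    have "3 ^ 3 \<le> m ^ 3" using m3 by (intro power_mono) auto
    also have "\<dots> \<le> m ^ m" using m3 by (intro power_increasing) auto
    finally have "27 \<le> K" unfolding K_def KK_def by simp
    then show ?thesis by simp
  qed
  have lm1: "1 \<le> log 2 (real m)" using m3 by simp
  have "27 * 3 * 1 \<le> real K * real m * log 2 (real m)"
    using K27 m3 lm1 by (intro mult_mono) auto
  then show ?thesis using A B unfolding n_def K_def by linarith
qed

theorem theorem2:
  shows "\<exists>c::real. c > 0 \<and>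
    infinite {n::nat. \<exists>F::pgraph set. finite F \<and> F \<noteq> {} \<and>
      (\<forall>G \<in> F. wf_pgraph G \<and> nv G = n \<and> feasible G \<and> election_index G = 1) \<and>
      (\<forall>(adv :: pgraph \<Rightarrow> bool list) (A :: bool list \<Rightarrow> view \<Rightarrow> nat list).
         (\<forall>G \<in> F. elects_time1 adv A G) \<longrightarrow>
         (\<exists>G \<in> F. real (length (adv G)) \<ge> c * real n * log 2 (log 2 (real n))))}"
proof (intro exI conjI)
  let ?c = "1 / 48 :: real"
  show "?c > 0" by simp
  let ?S = "{n::nat. \<exists>F::pgraph set. finite F \<and> F \<noteq> {} \<and>
      (\<forall>G \<in> F. wf_pgraph G \<and> nv G = n \<and> feasible G \<and> election_index G = 1) \<and>
      (\<forall>(adv :: pgraph \<Rightarrow> bool list) (A :: bool list \<Rightarrow> view \<Rightarrow> nat list).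
         (\<forall>G \<in> F. elects_time1 adv A G) \<longrightarrow>
         (\<exists>G \<in> F. real (length (adv G)) \<ge> ?c * real n * log 2 (log 2 (real n))))}"
  have mem: "NN m \<in> ?S" if m3: "3 \<le> m" for m
  proof -
    define P where "P = {\<rho>. \<rho> permutes {..<KK m}}"
    define F where "F = Gr m ` P"
    have finP: "finite P" unfolding P_def by (rule finite_permutations) simp
    have cardP: "card P = fact (KK m)" unfolding P_def by (rule card_permutations) simp_all
    have idP: "id \<in> P" unfolding P_def by (simp add: permutes_id)
    have props: "\<forall>G \<in> F. wf_pgraph G \<and> nv G = NN m \<and> feasible G \<and> election_index G = 1"
      unfolding F_def P_def using wf[OF m3] feas[OF m3] eidx[OF m3] Gr_simps(1)[OF m3] by auto
    have lower: "\<exists>G \<in> F. real (length (adv G)) \<ge> ?c * real (NN m) * log 2 (log 2 (real (NN m)))"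
      if H: "\<forall>G \<in> F. elects_time1 adv A G" for adv A
    proof (rule ccontr)
      define X where "X = ?c * real (NN m) * log 2 (log 2 (real (NN m)))"
      assume "\<not> (\<exists>G \<in> F. real (length (adv G)) \<ge> ?c * real (NN m) * log 2 (log 2 (real (NN m))))"
      then have sh: "\<forall>G\<in>F. real (length (adv G)) < X" unfolding X_def by auto
      define L where "L = nat \<lceil>X\<rceil>"
      have shL: "\<forall>G\<in>F. length (adv G) < L"
      proof
        fix G assume "G \<in> F"
        then have "real (length (adv G)) < X" using sh by blast
        then have "int (length (adv G)) < \<lceil>X\<rceil>" by (simp add: less_ceiling_iff)
        then show "length (adv G) < L" unfolding L_def by linarith
      qed
      have inj: "inj_on (\<lambda>\<rho>. adv (Gr m \<rho>)) P"
      proof (rule inj_onI)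
        fix \<rho> \<rho>' assume r: "\<rho> \<in> P" "\<rho>' \<in> P" and e: "adv (Gr m \<rho>) = adv (Gr m \<rho>')"
        have pr: "\<rho> permutes {..<KK m}" "\<rho>' permutes {..<KK m}" using r P_def by auto
        have E1: "elects (Gr m \<rho>) (\<lambda>v. A (adv (Gr m \<rho>)) (bview (Gr m \<rho>) 1 v))"
          using H r F_def elects_time1_def by blast
        have E2: "elects (Gr m \<rho>') (\<lambda>v. A (adv (Gr m \<rho>')) (bview (Gr m \<rho>') 1 v))"
          using H r F_def elects_time1_def by blast
        have "\<forall>v<NN m. A (adv (Gr m \<rho>)) (bview (Gr m \<rho>) 1 v) = A (adv (Gr m \<rho>')) (bview (Gr m \<rho>') 1 v)"
          using bview1[OF m3 pr(1)] bview1[OF m3 pr(2)] e by simp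
        then show "\<rho> = \<rho>'" using incompat[OF m3 pr(1) pr(2) E1 E2] by blast
      qed
      have "card ((\<lambda>\<rho>. adv (Gr m \<rho>)) ` P) = fact (KK m)" using card_image[OF inj] cardP by simp
      moreover have "(\<lambda>\<rho>. adv (Gr m \<rho>)) ` P \<subseteq> {xs. length xs < L}" using shL F_def by auto
      ultimately have "fact (KK m) < (2::nat) ^ L" using card_short_lists by metis
      then have "real (fact (KK m)) < 2 ^ L" by (metis of_nat_less_iff of_nat_numeral of_nat_power)
      then have "log 2 (real (fact (KK m))) < log 2 (2 ^ L)" by (intro log_less) auto
      then have lt: "log 2 (real (fact (KK m))) < real L" by (simp add: log_nat_power)
      have "2 \<le> NN m" unfolding NN_def using KK_big[OF m3] by simp
      then have "1 \<le> log 2 (real (NN m))" by simp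
      then have "0 \<le> log 2 (log 2 (real (NN m)))" by simp
      then have "X \<ge> 0" unfolding X_def by simp
      then have "real L \<le> X + 1" unfolding L_def by linarith
      then show False using lt bound[OF m3] X_def by linarith
    qed
    show ?thesis using finP idP props lower unfolding F_def by blast
  qed
  show "infinite ?S"
    unfolding infinite_nat_iff_unbounded_le
  proof
    fix N
    have "NN (max 3 N) \<in> ?S" by (rule mem) simp
    moreover have "max 3 N + 2 \<le> KK (max 3 N)" by (rule KK_big) simp
    then have "N \<le> NN (max 3 N)" unfolding NN_def by linarith
    ultimately show "\<exists>n\<ge>N. n \<in> ?S" by blast
  qed
qed



end
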